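(* Let $(X,\mu),(Y,\nu),(Z,\rho)$ be standard probability spaces with quotient maps $q:X\to Y$ and $p:X\to Z$. View $L^\infty(Y,\nu)$ and $L^\infty(Z,\rho)$ as subalgebras of $L^\infty(X,\mu)$ via $f\mapsto f\circ q$ and $f\mapsto f\circ p$, and let $E:L^\infty(X,\mu)\to L^\infty(Y,\nu)$ be the ($\mu$-preserving) conditional expectation. Suppose there exist $a_1,\dots,a_n\in L^\infty(X,\mu)$ and $C>0$ such that $\sum_{i=1}^n\|E(fa_i)\|_2^2\ge C$ for all $f\in L^\infty(Z,\rho)$ with $|f|=1$ a.e. Then $p$ locally factors through $q$.
   Context: A quotient map is a measurable, measure preserving, onto map. $\|g\|_2=(\int|g|^2d\mu)^{1/2}$. Locally factors: disintegrate $\mu=\int_Y\mu_y\,d\nu(y)$ with $\mu_y(q^{-1}(\{y\}))=1$; $p$ locally factors through $q$ if the set of $y\in Y$ with $(\mu_y\times\mu_y)(\{(x_1,x_2)\in X\times X: p(x_1)=p(x_2)\})>0$ has positive $\nu$-measure. *)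

theory Defs
  imports "HOL-Probability.Probability"
begin

definition standard_prob_space :: "'a::polish_space measure \<Rightarrow> bool" where
  "standard_prob_space M \<longleftrightarrow> prob_space M \<and> sets M = sets borel"

definition mp_quotient_map :: "'a measure \<Rightarrow> 'b measure \<Rightarrow> ('a \<Rightarrow> 'b) \<Rightarrow> bool" where
  "mp_quotient_map M N q \<longleftrightarrow> q \<in> measurable M N \<and> distr M N q = N \<and> q ` space M = space N"

definition cond_exp_c :: "'a measure \<Rightarrow> 'a measure \<Rightarrow> ('a \<Rightarrow> complex) \<Rightarrow> ('a \<Rightarrow> complex)" where
  "cond_exp_c M F g = (\<lambda>x. Complex (real_cond_exp M F (\<lambda>y. Re (g y)) x)
                                     (real_cond_exp M F (\<lambda>y. Im (g y)) x))"

definition Linfty :: "'a measure \<Rightarrow> ('a \<Rightarrow> complex) \<Rightarrow> bool" where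
  "Linfty M a \<longleftrightarrow> a \<in> borel_measurable M \<and> (\<exists>B. AE x in M. cmod (a x) \<le> B)"

definition disintegration :: "'a measure \<Rightarrow> 'b measure \<Rightarrow> ('a \<Rightarrow> 'b) \<Rightarrow> ('b \<Rightarrow> 'a measure) \<Rightarrow> bool" where
  "disintegration M N q K \<longleftrightarrow>
     K \<in> measurable N (subprob_algebra M) \<and>
     (AE y in N. prob_space (K y)) \<and>
     (AE y in N. emeasure (K y) (q -` {y} \<inter> space M) = 1) \<and>
     (\<forall>A\<in>sets M. emeasure M A = (\<integral>\<^sup>+ y. emeasure (K y) A \<partial>N))"

definition locally_factors :: "'a measure \<Rightarrow> 'b measure \<Rightarrow> ('a \<Rightarrow> 'b) \<Rightarrow> ('a \<Rightarrow> 'c) \<Rightarrow> bool" where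
  "locally_factors M N q p \<longleftrightarrow>
     (\<forall>K. disintegration M N q K \<longrightarrow>
        emeasure N {y \<in> space N.
           emeasure (K y \<Otimes>\<^sub>M K y) {(x1, x2) \<in> space M \<times> space M. p x1 = p x2} > 0} > 0)"

end

theory Submission
  imports Defs
begin

lemma series_inj:
  fixes b c :: "nat \<Rightarrow> real"
  assumes b: "\<And>j. b j \<in> {0,1}" and c: "\<And>j. c j \<in> {0,1}"
    and eq: "(\<Sum>j. (1/4)^j * b j) = (\<Sum>j. (1/4)^j * c j)"
  shows "b = c"
proof (rule ccontr)
  assume "b \<noteq> c"
  then obtain j0 where "b j0 \<noteq> c j0" by auto
  define m where "m = (LEAST j. b j \<noteq> c j)"
  have bm: "b m \<noteq> c m" unfolding m_def by (rule LeastI[of _ j0]) fact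
  have lt: "b j = c j" if "j < m" for j using not_less_Least[of j "\<lambda>j. b j \<noteq> c j"] that
    unfolding m_def by auto
  define d where "d j = (1/4::real)^j * (b j - c j)" for j
  have dbound: "\<bar>d j\<bar> \<le> (1/4)^j" for j
    using b[of j] c[of j] by (auto simp: d_def abs_mult)
  have sg: "summable (\<lambda>j. (1/4::real)^j)" by (rule summable_geometric) simp
  have sd: "summable d"
    by (rule summable_comparison_test'[OF sg]) (use dbound in auto)
  have bb: "norm ((1/4::real)^j * b j) \<le> (1/4)^j" for j using b[of j] by auto
  have cb: "norm ((1/4::real)^j * c j) \<le> (1/4)^j" for j using c[of j] by auto
  have sb: "summable (\<lambda>j. (1/4::real)^j * b j)"
    by (rule summable_comparison_test'[OF sg bb])
  have sc: "summable (\<lambda>j. (1/4::real)^j * c j)"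
    by (rule summable_comparison_test'[OF sg cb])
  have "suminf d = (\<Sum>j. (1/4)^j * b j) - (\<Sum>j. (1/4)^j * c j)"
    unfolding d_def right_diff_distrib by (rule suminf_diff[OF sb sc, symmetric])
  then have d0: "suminf d = 0" using eq by simp
  have "suminf d = (\<Sum>j. d (j + m)) + sum d {..<m}"
    by (rule suminf_split_initial_segment[OF sd])
  moreover have "sum d {..<m} = 0" by (auto simp: d_def lt intro!: sum.neutral)
  ultimately have s1: "(\<Sum>j. d (j + m)) = 0" using d0 by simp
  have sdm: "summable (\<lambda>j. d (j + m))" using sd by (rule summable_ignore_initial_segment)
  have "(\<Sum>j. d (Suc j + m)) = (\<Sum>j. d (j + m)) - d (0 + m)"
    using suminf_split_head[OF sdm] by simp
  then have s2: "(\<Sum>j. d (Suc j + m)) = - d m" using s1 by simp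
  have sdm1: "summable (\<lambda>j. d (Suc j + m))" using sdm by (subst summable_Suc_iff) 
  have sgm: "summable (\<lambda>j. (1/4::real)^(Suc j + m))"
  proof -
    have "(\<lambda>j. (1/4::real)^(Suc j + m)) = (\<lambda>j. (1/4)^(Suc m) * (1/4)^j)"
      by (rule ext) (simp add: power_add)
    then show ?thesis using summable_mult[OF sg, of "(1/4::real)^Suc m"] by simp
  qed
  have db2: "norm \<bar>d (Suc j + m)\<bar> \<le> (1/4::real)^(Suc j + m)" for j
    using dbound[of "Suc j + m"] by simp
  have se: "summable (\<lambda>j. \<bar>d (Suc j + m)\<bar>)"
    by (rule summable_comparison_test'[OF sgm db2])
  have "\<bar>\<Sum>j. d (Suc j + m)\<bar> \<le> (\<Sum>j. \<bar>d (Suc j + m)\<bar>)"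
    by (rule summable_rabs[OF se])
  also have "\<dots> \<le> (\<Sum>j. (1/4::real)^(Suc j + m))"
    by (rule suminf_le[OF _ se sgm]) (use dbound in blast)
  also have "\<dots> = (1/4)^m * (1/4) * (\<Sum>j. (1/4::real)^j)"
    by (subst suminf_mult[OF sg, symmetric]) (simp add: power_add mult_ac)
  also have "\<dots> = (1/4)^m / 3" by (subst suminf_geometric) auto
  finally have "\<bar>d m\<bar> \<le> (1/4)^m / 3" using s2 by simp
  moreover have "\<bar>d m\<bar> = (1/4)^m" using b[of m] c[of m] bm by (auto simp: d_def)
  ultimately show False by simp
qed


lemma exists_inj_borel:
  "\<exists>\<phi>::'a::{second_countable_topology, t1_space} \<Rightarrow> real.
     \<phi> \<in> borel_measurable borel \<and> inj \<phi> \<and> (\<forall>z. 0 \<le> \<phi> z \<and> \<phi> z \<le> 2)"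
proof -
  obtain Bs :: "'a set set" where cB: "countable Bs" and tB: "topological_basis Bs"
    using ex_countable_basis by blast
  obtain B0 where "B0 \<in> Bs" using topological_basisE[OF tB open_UNIV UNIV_I[of undefined]] by blast
  then have ne: "Bs \<noteq> {}" by auto
  define U where "U j = from_nat_into Bs j" for j
  have Uo: "open (U j)" for j
    unfolding U_def by (rule topological_basis_open[OF tB from_nat_into[OF ne]])
  define \<phi> where "\<phi> z = (\<Sum>j. (1/4::real)^j * indicator (U j) z)" for z
  have sg: "summable (\<lambda>j. (1/4::real)^j)" by (rule summable_geometric) simp
  have tb: "norm ((1/4::real)^j * indicator (U j) z) \<le> (1/4)^j" for j z
    by (auto simp: indicator_def)
  have sm: "summable (\<lambda>j. (1/4::real)^j * indicator (U j) z)" for z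
    by (rule summable_comparison_test'[OF sg tb])
  have meas: "\<phi> \<in> borel_measurable borel"
    unfolding \<phi>_def
    by (intro borel_measurable_suminf borel_measurable_times borel_measurable_const
        borel_measurable_indicator) (simp add: Uo)
  have bnd: "0 \<le> \<phi> z \<and> \<phi> z \<le> 2" for z
  proof
    show "0 \<le> \<phi> z" unfolding \<phi>_def by (rule suminf_nonneg[OF sm]) auto
    have "\<phi> z \<le> (\<Sum>j. (1/4::real)^j)" unfolding \<phi>_def
      by (rule suminf_le[OF _ sm sg]) (auto simp: indicator_def)
    also have "\<dots> = 4/3" by (subst suminf_geometric) auto
    finally show "\<phi> z \<le> 2" by simp
  qed
  have "inj \<phi>"
  proof (rule injI, rule ccontr)
    fix z1 z2 assume eq: "\<phi> z1 = \<phi> z2" and ne12: "z1 \<noteq> z2"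
    have "(\<lambda>j. indicator (U j) z1 :: real) = (\<lambda>j. indicator (U j) z2)"
      by (rule series_inj) (use eq in \<open>auto simp: \<phi>_def indicator_def\<close>)
    moreover obtain O' where "open O'" "z1 \<in> O'" "z2 \<notin> O'" using t1_space[OF ne12] by blast
    then obtain B' where B': "B' \<in> Bs" "z1 \<in> B'" "B' \<subseteq> O'" using topological_basisE[OF tB] by metis
    then obtain j where "from_nat_into Bs j = B'" using from_nat_into_surj[OF cB] by blast
    then have "z1 \<in> U j" "z2 \<notin> U j" using B' \<open>z2 \<notin> O'\<close> by (auto simp: U_def)
    ultimately show False by (metis indicator_simps zero_neq_one)
  qed
  then show ?thesis using meas bnd by blast
qed


definition avgc :: "nat \<Rightarrow> real \<Rightarrow> complex" where
  "avgc T d = (\<Sum>t<T. cis (real t * d)) / of_nat T"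

lemma avgc_norm: "norm (avgc T d) \<le> 1"
proof (cases "T = 0")
  case False
  have "norm (\<Sum>t<T. cis (real t * d)) \<le> (\<Sum>t<T. norm (cis (real t * d)))" by (rule norm_sum)
  also have "\<dots> = real T" by simp
  finally show ?thesis using False by (simp add: avgc_def norm_divide divide_le_eq)
qed (simp add: avgc_def)

lemma avgc_zero: "T > 0 \<Longrightarrow> avgc T 0 = 1"
  by (simp add: avgc_def)

lemma avgc_tendsto:
  assumes "d \<noteq> 0" "\<bar>d\<bar> < 2 * pi"
  shows "(\<lambda>T. avgc T d) \<longlonglongrightarrow> 0"
proof -
  define w where "w = cis d"
  have w1: "w \<noteq> 1"
  proof
    assume "w = 1"
    then have "cos d = 1" unfolding w_def by (metis cis.sel(1) one_complex.sel(1))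
    then obtain k :: int where k: "d = real_of_int k * 2 * pi" using cos_one_2pi_int[of d] by auto
    with assms have "k \<noteq> 0" by auto
    then have "\<bar>real_of_int k\<bar> \<ge> 1" by linarith
    then have "\<bar>d\<bar> \<ge> 2 * pi" using k by (simp add: abs_mult)
    with assms show False by simp
  qed
  define K where "K = 2 / norm (1 - w)"
  have bound: "norm (avgc T d) \<le> K / real T" for T
  proof -
    have "(\<Sum>t<T. cis (real t * d)) = (\<Sum>t<T. w ^ t)"
      unfolding w_def by (rule sum.cong) (simp_all only: Complex.DeMoivre)
    also have "\<dots> = (1 - w ^ T) / (1 - w)" using w1 by (simp add: sum_gp_strict)
    finally have e: "(\<Sum>t<T. cis (real t * d)) = (1 - w ^ T) / (1 - w)" .
    have "norm (1 - w ^ T) \<le> norm (1::complex) + norm (w ^ T)" by (rule norm_triangle_ineq4)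
    also have "\<dots> = 2" by (simp add: w_def norm_power)
    finally have "norm ((1 - w ^ T) / (1 - w)) \<le> K"
      using w1 by (simp add: K_def norm_divide divide_right_mono)
    then have "norm (\<Sum>t<T. cis (real t * d)) / real T \<le> K / real T"
      using e by (simp add: divide_right_mono)
    moreover have "norm (avgc T d) = norm (\<Sum>t<T. cis (real t * d)) / real T"
      unfolding avgc_def by (simp add: norm_divide)
    ultimately show ?thesis by simp
  qed
  have "(\<lambda>T. K / real T) \<longlonglongrightarrow> 0" by (rule lim_const_over_n)
  then show ?thesis
    by (rule Lim_null_comparison[rotated]) (use bound in auto)
qed


lemma subprob_int_bound:
  fixes f :: "'a \<Rightarrow> 'b::{banach,second_countable_topology}"
  assumes L: "subprob_space L" and f: "f \<in> borel_measurable L"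
    and b: "\<And>x. x \<in> space L \<Longrightarrow> norm (f x) \<le> B" and B: "0 \<le> B"
  shows "norm (integral\<^sup>L L f) \<le> B"
proof -
  interpret subprob_space L by (rule L)
  have int: "integrable L (\<lambda>x. norm (f x))"
    by (rule integrable_const_bound[where B=B]) (use b f in auto)
  have "norm (integral\<^sup>L L f) \<le> (\<integral>x. norm (f x) \<partial>L)" by (rule integral_norm_bound)
  also have "\<dots> \<le> (\<integral>x. B \<partial>L)" by (rule integral_mono[OF int]) (use b in auto)
  also have "\<dots> = measure L (space L) * B" by simp
  also have "\<dots> \<le> 1 * B" by (rule mult_right_mono[OF subprob_measure_le_1 B])
  finally show ?thesis by simp
qed

lemma cis_meas: "cis \<in> borel_measurable borel"
  by (intro borel_measurable_continuous_onI continuous_intros)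

lemma cnj_meas: "cnj \<in> borel_measurable borel"
  by (intro borel_measurable_continuous_onI continuous_intros)

lemma measurable_cnj[measurable]:
  "f \<in> borel_measurable M \<Longrightarrow> (\<lambda>x. cnj (f x)) \<in> borel_measurable M"
  by (rule measurable_compose[OF _ cnj_meas])

lemma measurable_cis[measurable]:
  "f \<in> borel_measurable M \<Longrightarrow> (\<lambda>x. cis (f x)) \<in> borel_measurable M"
  by (rule measurable_compose[OF _ cis_meas])

lemma avgc_sum: "(\<Sum>t<T. cis (real t * d)) = of_nat T * avgc T d"
  by (cases "T = 0") (simp_all add: avgc_def)

lemma avgc_meas[measurable]:
  "f \<in> borel_measurable M \<Longrightarrow> (\<lambda>x. avgc T (f x)) \<in> borel_measurable M"
  unfolding avgc_def by (intro borel_measurable_divide borel_measurable_const) measurable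

lemma avg_bound:
  fixes L :: "'x measure" and a :: "'x \<Rightarrow> complex" and \<psi> :: "'x \<Rightarrow> real"
  assumes L: "prob_space L" and am[measurable]: "a \<in> borel_measurable L"
    and ab: "\<And>x. x \<in> space L \<Longrightarrow> cmod (a x) \<le> B"
    and \<psi>m[measurable]: "\<psi> \<in> borel_measurable L"
  shows "(\<Sum>t<T. (cmod (\<integral>x. cis (real t * \<psi> x) * a x \<partial>L))\<^sup>2)
     \<le> real T * B\<^sup>2 * (\<integral>z. cmod (avgc T (\<psi> (fst z) - \<psi> (snd z))) \<partial>(L \<Otimes>\<^sub>M L))"
proof -
  interpret pair_prob_space L L
    by (simp add: pair_prob_space_def pair_sigma_finite_def L prob_space_imp_sigma_finite)
  obtain x0 where "x0 \<in> space L" using M1.not_empty by blast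
  then have B0: "0 \<le> B" using ab[of x0] norm_ge_zero[of "a x0"] by linarith
  define u where "u t x = cis (real t * \<psi> x) * a x" for t x
  have um[measurable]: "u t \<in> borel_measurable L" for t unfolding u_def by measurable
  have ub: "cmod (u t x) \<le> B" if "x \<in> space L" for t x
    using ab[OF that] by (simp add: u_def norm_mult)
  define G where "G t z = u t (fst z) * cnj (u t (snd z))" for t z
  have Gm[measurable]: "G t \<in> borel_measurable (L \<Otimes>\<^sub>M L)" for t unfolding G_def by measurable
  have Gb: "cmod (G t z) \<le> B\<^sup>2" if "z \<in> space (L \<Otimes>\<^sub>M L)" for t z
  proof -
    have "cmod (G t z) = cmod (u t (fst z)) * cmod (u t (snd z))" by (simp add: G_def norm_mult)
    also have "\<dots> \<le> B * B"
      using that ub by (intro mult_mono) (auto simp: space_pair_measure B0)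
    finally show ?thesis by (simp add: power2_eq_square)
  qed
  have Gint: "integrable (L \<Otimes>\<^sub>M L) (G t)" for t
    by (rule integrable_const_bound[where B="B\<^sup>2"]) (use Gb in auto)
  have uint: "integrable L (u t)" for t
    by (rule M1.integrable_const_bound[where B=B]) (use ub in auto)
  have key: "complex_of_real ((cmod (\<integral>x. u t x \<partial>L))\<^sup>2) = integral\<^sup>L (L \<Otimes>\<^sub>M L) (G t)" for t
  proof -
    have "complex_of_real ((cmod (\<integral>x. u t x \<partial>L))\<^sup>2) = (\<integral>x. u t x \<partial>L) * cnj (\<integral>x. u t x \<partial>L)"
      by (rule complex_norm_square)
    also have "\<dots> = (\<integral>x. u t x * cnj (\<integral>y. u t y \<partial>L) \<partial>L)" by simp
    also have "\<dots> = (\<integral>x. (\<integral>y. u t x * cnj (u t y) \<partial>L) \<partial>L)" by simp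
    also have "\<dots> = integral\<^sup>L (L \<Otimes>\<^sub>M L) (\<lambda>(x, y). u t x * cnj (u t y))"
    proof (rule integral_fst)
      have "G t = (\<lambda>(x, y). u t x * cnj (u t y))" by (auto simp: G_def fun_eq_iff)
      then show "integrable (L \<Otimes>\<^sub>M L) (\<lambda>(x, y). u t x * cnj (u t y))" using Gint[of t] by simp
    qed
    also have "\<dots> = integral\<^sup>L (L \<Otimes>\<^sub>M L) (G t)"
      by (rule arg_cong[where f="integral\<^sup>L (L \<Otimes>\<^sub>M L)"]) (auto simp: G_def fun_eq_iff)
    finally show ?thesis .
  qed
  have Gsum: "(\<Sum>t<T. G t z) = a (fst z) * cnj (a (snd z)) * (of_nat T * avgc T (\<psi> (fst z) - \<psi> (snd z)))" for z
  proof -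
    have "G t z = a (fst z) * cnj (a (snd z)) * cis (real t * (\<psi> (fst z) - \<psi> (snd z)))" for t
    proof -
      have c: "cis (real t * \<psi> (fst z)) * cis (- (real t * \<psi> (snd z))) = cis (real t * (\<psi> (fst z) - \<psi> (snd z)))"
        by (simp only: cis_mult right_diff_distrib diff_conv_add_uminus[symmetric])
      have "G t z = (cis (real t * \<psi> (fst z)) * cis (- (real t * \<psi> (snd z)))) * (a (fst z) * cnj (a (snd z)))"
        by (simp only: G_def u_def cis_cnj complex_cnj_mult mult_ac)
      then show ?thesis by (simp only: c mult_ac)
    qed
    then show ?thesis by (simp add: sum_distrib_left[symmetric] avgc_sum)
  qed
  define W where "W z = cmod (avgc T (\<psi> (fst z) - \<psi> (snd z)))" for z
  have Wm[measurable]: "W \<in> borel_measurable (L \<Otimes>\<^sub>M L)" unfolding W_def by measurable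
  have "complex_of_real (\<Sum>t<T. (cmod (\<integral>x. u t x \<partial>L))\<^sup>2) = (\<Sum>t<T. integral\<^sup>L (L \<Otimes>\<^sub>M L) (G t))"
    by (simp only: of_real_sum key)
  also have "\<dots> = (\<integral>z. (\<Sum>t<T. G t z) \<partial>(L \<Otimes>\<^sub>M L))"
    by (rule Bochner_Integration.integral_sum[symmetric]) (rule Gint)
  finally have e1: "complex_of_real (\<Sum>t<T. (cmod (\<integral>x. u t x \<partial>L))\<^sup>2) = (\<integral>z. (\<Sum>t<T. G t z) \<partial>(L \<Otimes>\<^sub>M L))" .
  have "(\<Sum>t<T. (cmod (\<integral>x. u t x \<partial>L))\<^sup>2) = cmod (complex_of_real (\<Sum>t<T. (cmod (\<integral>x. u t x \<partial>L))\<^sup>2))"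
    by (simp only: norm_of_real abs_of_nonneg[OF sum_nonneg[OF zero_le_power2]])
  also have "\<dots> \<le> (\<integral>z. cmod (\<Sum>t<T. G t z) \<partial>(L \<Otimes>\<^sub>M L))"
    unfolding e1 by (rule integral_norm_bound)
  also have "\<dots> \<le> (\<integral>z. real T * B\<^sup>2 * W z \<partial>(L \<Otimes>\<^sub>M L))"
  proof (rule integral_mono)
    show "integrable (L \<Otimes>\<^sub>M L) (\<lambda>z. cmod (\<Sum>t<T. G t z))"
      by (intro integrable_norm Bochner_Integration.integrable_sum Gint)
    show "integrable (L \<Otimes>\<^sub>M L) (\<lambda>z. real T * B\<^sup>2 * W z)"
      by (intro integrable_mult_right, rule integrable_const_bound[where B=1])
         (auto simp: W_def avgc_norm)
    fix z assume z: "z \<in> space (L \<Otimes>\<^sub>M L)"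
    have "cmod (\<Sum>t<T. G t z) = cmod (a (fst z)) * cmod (a (snd z)) * (real T * W z)"
      by (simp add: Gsum norm_mult W_def)
    also have "\<dots> \<le> B * B * (real T * W z)"
      using z ab by (intro mult_mono mult_nonneg_nonneg) (auto simp: space_pair_measure B0 W_def)
    finally show "cmod (\<Sum>t<T. G t z) \<le> real T * B\<^sup>2 * W z" by (simp add: power2_eq_square mult_ac)
  qed
  also have "\<dots> = real T * B\<^sup>2 * (\<integral>z. W z \<partial>(L \<Otimes>\<^sub>M L))" by simp
  finally show ?thesis by (simp add: u_def W_def)
qed

locale dis_setup =
  fixes M :: "'x measure" and N :: "'y measure" and q :: "'x \<Rightarrow> 'y" and K :: "'y \<Rightarrow> 'x measure"
  assumes PM: "prob_space M" and PN: "prob_space N"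
    and dis: "disintegration M N q K"
    and qm: "q \<in> measurable M N" and qd: "distr M N q = N"
begin

lemma Km: "K \<in> measurable N (subprob_algebra M)"
  using dis by (simp add: disintegration_def)

lemma spN: "space N \<noteq> {}"
  using PN prob_space.not_empty by blast

lemma M_bind: "M = N \<bind> K"
proof (rule measure_eqI)
  show "sets M = sets (N \<bind> K)"
    by (rule sets_bind[symmetric]) (use sets_kernel[OF Km] spN in auto)
  fix A assume "A \<in> sets M"
  then show "emeasure M A = emeasure (N \<bind> K) A"
    using dis by (simp add: disintegration_def emeasure_bind[OF spN Km])
qed

lemma K_conc: "AE y in N. prob_space (K y) \<and> (AE x in K y. x \<in> space M \<and> q x = y)"
proof -
  have "AE y in N. prob_space (K y)" "AE y in N. emeasure (K y) (q -` {y} \<inter> space M) = 1"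
    using dis by (auto simp: disintegration_def)
  then show ?thesis
  proof (eventually_elim)
    case (elim y)
    show ?case
    proof (intro conjI)
      show "prob_space (K y)" by fact
      interpret P: prob_space "K y" by fact
      have "AE x in K y. x \<in> q -` {y} \<inter> space M"
        by (rule P.AE_prob_1) (use elim in \<open>simp add: P.emeasure_eq_measure\<close>)
      then show "AE x in K y. x \<in> space M \<and> q x = y" by eventually_elim auto
    qed
  qed
qed

abbreviation "FF \<equiv> vimage_algebra (space M) q N"

lemma qspace: "q \<in> space M \<rightarrow> space N"
  using measurable_space[OF qm] by blast

lemma subalg: "subalgebra M FF"
  unfolding subalgebra_def
proof
  show "space FF = space M" by simp
  show "sets FF \<subseteq> sets M"
    using qm by (auto simp: sets_vimage_algebra2[OF qspace] intro: measurable_sets)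
qed

lemma sfs: "sigma_finite_subalgebra M FF"
proof (rule finite_measure_subalgebra_is_sigma_finite)
  interpret prob_space M by (rule PM)
  show "finite_measure_subalgebra M FF"
    by unfold_locales (rule subalg)
qed

lemma Ky_sets: "y \<in> space N \<Longrightarrow> sets (K y) = sets M"
  using sets_kernel[OF Km] by auto

lemma Ky_space: "y \<in> space N \<Longrightarrow> space (K y) = space M"
  using Ky_sets sets_eq_imp_space_eq by blast

lemma Ky_meas: "y \<in> space N \<Longrightarrow> f \<in> borel_measurable M \<Longrightarrow> f \<in> borel_measurable (K y)"
  using Ky_sets measurable_cong_sets by blast

lemma Ky_sub: "y \<in> space N \<Longrightarrow> subprob_space (K y)"
  using subprob_space_kernel[OF Km] by auto

lemma H_meas:
  fixes v :: "'x \<Rightarrow> 'b::{banach,second_countable_topology}"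
  assumes "v \<in> borel_measurable M"
  shows "(\<lambda>y. \<integral>x. v x \<partial>K y) \<in> borel_measurable N"
  by (rule measurable_compose[OF Km integral_measurable_subprob_algebra[OF assms]])

lemma H_bound:
  fixes v :: "'x \<Rightarrow> 'b::{banach,second_countable_topology}"
  assumes "v \<in> borel_measurable M" "\<And>x. x \<in> space M \<Longrightarrow> norm (v x) \<le> B" "0 \<le> B"
    "y \<in> space N"
  shows "norm (\<integral>x. v x \<partial>K y) \<le> B"
  by (rule subprob_int_bound[OF Ky_sub[OF assms(4)] Ky_meas[OF assms(4,1)]])
     (use assms Ky_space in auto)

lemma int_bind:
  fixes v :: "'x \<Rightarrow> real"
  assumes "v \<in> borel_measurable M" "\<And>x. x \<in> space M \<Longrightarrow> \<bar>v x\<bar> \<le> B"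
  shows "(\<integral>x. v x \<partial>M) = (\<integral>y. (\<integral>x. v x \<partial>K y) \<partial>N)"
proof -
  interpret prob_space N by (rule PN)
  have "(\<integral>x. v x \<partial>M) = (\<integral>x. v x \<partial>(N \<bind> K))" using M_bind by simp
  also have "\<dots> = (\<integral>y. (\<integral>x. v x \<partial>K y) \<partial>N)"
    by (rule integral_bind[where B'=1, OF assms(1) assms(2) Km]) 
       (auto intro!: AE_I2 subprob_space.subprob_emeasure_le_1 Ky_sub simp: finite_measure_axioms)
  finally show ?thesis .
qed

lemma cexp_real:
  assumes v: "v \<in> borel_measurable M" and b: "\<And>x. x \<in> space M \<Longrightarrow> \<bar>v x\<bar> \<le> B"
  shows "AE x in M. real_cond_exp M FF v x = (\<integral>z. v z \<partial>K (q x))"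
proof -
  interpret prob_space M by (rule PM)
  obtain x0 where "x0 \<in> space M" using not_empty by blast
  then have B0: "0 \<le> B" using b[of x0] by linarith
  define H where "H y = (\<integral>z. v z \<partial>K y)" for y
  have Hm: "H \<in> borel_measurable N" unfolding H_def by (rule H_meas[OF v])
  have Hb: "\<bar>H y\<bar> \<le> B" if "y \<in> space N" for y
    using H_bound[OF v _ B0 that] b unfolding H_def by auto
  have HqF: "(\<lambda>x. H (q x)) \<in> borel_measurable FF"
    by (rule measurable_compose[OF measurable_vimage_algebra1[OF qspace] Hm])
  have HqM: "(\<lambda>x. H (q x)) \<in> borel_measurable M"
    by (rule measurable_compose[OF qm Hm])
  have intv: "integrable M v" by (rule integrable_const_bound[where B=B]) (use b v in auto)
  have intH: "integrable M (\<lambda>x. H (q x))"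
    by (rule integrable_const_bound[where B=B]) (use Hb HqM measurable_space[OF qm] in auto)
  have "AE x in M. real_cond_exp M FF v x = H (q x)"
  proof (rule sigma_finite_subalgebra.real_cond_exp_charact[OF sfs _ intv intH HqF])
    fix A assume "A \<in> sets FF"
    then obtain C where C: "C \<in> sets N" and A: "A = q -` C \<inter> space M"
      by (auto simp: sets_vimage_algebra2[OF qspace])
    have AM: "A \<in> sets M" using A C qm by (auto intro: measurable_sets)
    have "(\<integral>x\<in>A. v x \<partial>M) = (\<integral>x. indicator A x * v x \<partial>M)"
      by (simp add: set_lebesgue_integral_def)
    also have "\<dots> = (\<integral>y. (\<integral>x. indicator A x * v x \<partial>K y) \<partial>N)"
      by (rule int_bind[where B=B]) (use AM v b B0 in \<open>auto simp: indicator_def\<close>)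
    also have "\<dots> = (\<integral>y. indicator C y * H y \<partial>N)"
    proof (rule integral_cong_AE)
      show "(\<lambda>y. \<integral>x. indicator A x * v x \<partial>K y) \<in> borel_measurable N"
        by (rule H_meas) (use AM v in measurable)
      show "(\<lambda>y. indicator C y * H y) \<in> borel_measurable N" using Hm C by measurable
      show "AE y in N. (\<integral>x. indicator A x * v x \<partial>K y) = indicator C y * H y"
        using K_conc AE_space[of N]
      proof eventually_elim
        case (elim y)
        have m1: "(\<lambda>x. indicator A x * v x) \<in> borel_measurable (K y)"
          by (rule Ky_meas[OF elim(2)]) (use AM v in measurable)
        have m2: "(\<lambda>x. indicator C y * v x) \<in> borel_measurable (K y)"
          by (rule Ky_meas[OF elim(2)]) (use v in measurable)
        have "(\<integral>x. indicator A x * v x \<partial>K y) = (\<integral>x. indicator C y * v x \<partial>K y)"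
          by (rule integral_cong_AE[OF m1 m2]) (use elim in \<open>auto simp: A indicator_def\<close>)
        then show ?case by (simp add: H_def)
      qed
    qed
    also have "\<dots> = (\<integral>y. indicator C y * H y \<partial>distr M N q)" using qd by simp
    also have "\<dots> = (\<integral>x. indicator C (q x) * H (q x) \<partial>M)"
      by (rule integral_distr[OF qm]) (use Hm C in measurable)
    also have "\<dots> = (\<integral>x. indicator A x * H (q x) \<partial>M)"
      by (rule Bochner_Integration.integral_cong) (use A in \<open>auto simp: indicator_def\<close>)
    also have "\<dots> = (\<integral>x\<in>A. H (q x) \<partial>M)"
      by (simp add: set_lebesgue_integral_def)
    finally show "(\<integral>x\<in>A. v x \<partial>M) = (\<integral>x\<in>A. H (q x) \<partial>M)" .
  qed
  then show ?thesis by (simp add: H_def)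
qed

lemma cexp_meas: "cond_exp_c M FF u \<in> borel_measurable M"
  unfolding cond_exp_c_def borel_measurable_complex_iff
  using borel_measurable_cond_exp2 by simp

lemma cexp_c:
  fixes u :: "'x \<Rightarrow> complex"
  assumes u[measurable]: "u \<in> borel_measurable M" and b: "\<And>x. x \<in> space M \<Longrightarrow> cmod (u x) \<le> B"
  shows "AE x in M. cond_exp_c M FF u x = (\<integral>z. u z \<partial>K (q x))"
proof -
  have bRe: "\<bar>Re (u x)\<bar> \<le> B" if "x \<in> space M" for x using b[OF that] abs_Re_le_cmod[of "u x"] by linarith
  have bIm: "\<bar>Im (u x)\<bar> \<le> B" if "x \<in> space M" for x using b[OF that] abs_Im_le_cmod[of "u x"] by linarith
  have "AE x in M. real_cond_exp M FF (\<lambda>x. Re (u x)) x = (\<integral>z. Re (u z) \<partial>K (q x))"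
    by (rule cexp_real) (use bRe in auto)
  moreover have "AE x in M. real_cond_exp M FF (\<lambda>x. Im (u x)) x = (\<integral>z. Im (u z) \<partial>K (q x))"
    by (rule cexp_real) (use bIm in auto)
  ultimately show ?thesis using AE_space
  proof eventually_elim
    case (elim x)
    have qx: "q x \<in> space N" using elim(3) qm by (auto simp: measurable_def)
    interpret S: subprob_space "K (q x)" by (rule Ky_sub[OF qx])
    have int: "integrable (K (q x)) u"
      by (rule S.integrable_const_bound[where B=B]) (use b Ky_space[OF qx] Ky_meas[OF qx u] in auto)
    show ?case unfolding cond_exp_c_def using elim int
      by (intro complex_eqI) simp_all
  qed
qed

lemma sq_int:
  fixes u :: "'x \<Rightarrow> complex"
  assumes u[measurable]: "u \<in> borel_measurable M" and b: "\<And>x. x \<in> space M \<Longrightarrow> cmod (u x) \<le> B"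
  shows "(\<integral>x. (cmod (cond_exp_c M FF u x))\<^sup>2 \<partial>M) = (\<integral>y. (cmod (\<integral>z. u z \<partial>K y))\<^sup>2 \<partial>N)"
proof -
  have Hm[measurable]: "(\<lambda>y. \<integral>z. u z \<partial>K y) \<in> borel_measurable N" by (rule H_meas[OF u])
  have "(\<integral>x. (cmod (cond_exp_c M FF u x))\<^sup>2 \<partial>M) = (\<integral>x. (cmod (\<integral>z. u z \<partial>K (q x)))\<^sup>2 \<partial>M)"
  proof (rule integral_cong_AE)
    show "(\<lambda>x. (cmod (cond_exp_c M FF u x))\<^sup>2) \<in> borel_measurable M"
      using cexp_meas[of u] by measurable
    show "(\<lambda>x. (cmod (\<integral>z. u z \<partial>K (q x)))\<^sup>2) \<in> borel_measurable M"
      using measurable_compose[OF qm Hm] by measurable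
    show "AE x in M. (cmod (cond_exp_c M FF u x))\<^sup>2 = (cmod (\<integral>z. u z \<partial>K (q x)))\<^sup>2"
      using cexp_c[OF u b] by (rule eventually_mono) simp_all
  qed
  also have "\<dots> = (\<integral>y. (cmod (\<integral>z. u z \<partial>K y))\<^sup>2 \<partial>distr M N q)"
    by (rule integral_distr[symmetric, OF qm]) measurable
  also have "\<dots> = (\<integral>y. (cmod (\<integral>z. u z \<partial>K y))\<^sup>2 \<partial>N)" using qd by simp
  finally show ?thesis .
qed

lemma Kp: "(\<lambda>y. K y \<Otimes>\<^sub>M K y) \<in> measurable N (subprob_algebra (M \<Otimes>\<^sub>M M))"
  by (rule measurable_pair_measure[OF Km Km])

lemma Kp_sets: "y \<in> space N \<Longrightarrow> sets (K y \<Otimes>\<^sub>M K y) = sets (M \<Otimes>\<^sub>M M)"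
  using sets_kernel[OF Kp] by auto

lemma Kp_sub: "y \<in> space N \<Longrightarrow> subprob_space (K y \<Otimes>\<^sub>M K y)"
  using subprob_space_kernel[OF Kp] by auto

end

theorem lemma1p3p3:
  fixes M :: "'x::polish_space measure" and N :: "'y::polish_space measure"
    and R :: "'z::polish_space measure"
    and q :: "'x \<Rightarrow> 'y" and p :: "'x \<Rightarrow> 'z"
    and a :: "nat \<Rightarrow> 'x \<Rightarrow> complex" and n :: nat and C :: real
  assumes "standard_prob_space M" and "standard_prob_space N" and "standard_prob_space R"
    and "mp_quotient_map M N q" and "mp_quotient_map M R p"
    and "\<And>i. i < n \<Longrightarrow> Linfty M (a i)"
    and "C > 0"
    and "\<And>f. f \<in> borel_measurable R \<Longrightarrow> (AE z in R. cmod (f z) = 1) \<Longrightarrow>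
          (\<Sum>i<n. \<integral>x. (cmod (cond_exp_c M (vimage_algebra (space M) q N)
                                   (\<lambda>x. f (p x) * a i x) x))\<^sup>2 \<partial>M) \<ge> C"
  shows "locally_factors M N q p"
proof (rule ccontr)
  note std = assms(1-3)[unfolded standard_prob_space_def]
  have PM: "prob_space M" and PN: "prob_space N" and PR: "prob_space R"
    and sR: "sets R = sets borel" using std by auto
  have qm: "q \<in> measurable M N" and qd: "distr M N q = N"
    using assms(4) by (auto simp: mp_quotient_map_def)
  have pm: "p \<in> measurable M R" using assms(5) by (auto simp: mp_quotient_map_def)
  define D where "D = {(x1, x2) \<in> space M \<times> space M. p x1 = p x2}"
  assume "\<not> locally_factors M N q p"
  then obtain K where dis: "disintegration M N q K"
    and nz: "\<not> emeasure N {y \<in> space N. emeasure (K y \<Otimes>\<^sub>M K y) D > 0} > 0"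
    unfolding locally_factors_def D_def by blast
  interpret S: dis_setup M N q K
    unfolding dis_setup_def using PM PN dis qm qd by blast
  obtain \<phi> :: "'z \<Rightarrow> real" where \<phi>m: "\<phi> \<in> borel_measurable borel" and \<phi>i: "inj \<phi>"
    and \<phi>b: "\<And>z. 0 \<le> \<phi> z \<and> \<phi> z \<le> 2"
    using exists_inj_borel by blast
  have \<phi>R: "\<phi> \<in> borel_measurable R" using \<phi>m sR measurable_cong_sets by blast
  define \<psi> where "\<psi> x = \<phi> (p x)" for x
  have \<psi>m[measurable]: "\<psi> \<in> borel_measurable M" unfolding \<psi>_def by (rule measurable_compose[OF pm \<phi>R])
  have am[measurable]: "a i \<in> borel_measurable M" if "i < n" for i
    using assms(6)[OF that] by (simp add: Linfty_def)
  have "\<forall>i. \<exists>B. i < n \<longrightarrow> (AE x in M. cmod (a i x) \<le> B)"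
    using assms(6) by (auto simp: Linfty_def)
  then obtain Bf where Bf: "\<And>i. i < n \<Longrightarrow> AE x in M. cmod (a i x) \<le> Bf i" by metis
  define B where "B = (\<Sum>i<n. \<bar>Bf i\<bar>)"
  have B0: "0 \<le> B" unfolding B_def by (rule sum_nonneg) simp
  have BfB: "Bf i \<le> B" if "i < n" for i
  proof -
    have "\<bar>Bf i\<bar> \<le> B" unfolding B_def by (rule member_le_sum) (use that in auto)
    then show ?thesis by linarith
  qed
  define a' where "a' i x = (if cmod (a i x) \<le> B then a i x else 0)" for i x
  have a'm[measurable]: "a' i \<in> borel_measurable M" if "i < n" for i
    unfolding a'_def using am[OF that] by measurable
  have a'b: "cmod (a' i x) \<le> B" for i x using B0 by (simp add: a'_def)
  have a'ae: "AE x in M. a' i x = a i x" if "i < n" for i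
    using Bf[OF that] by eventually_elim (use BfB[OF that] in \<open>auto simp: a'_def\<close>)
  define u where "u t i x = cis (real t * \<psi> x) * a' i x" for t i x
  have um[measurable]: "u t i \<in> borel_measurable M" if "i < n" for t i
    unfolding u_def using a'm[OF that] by measurable
  have ub: "cmod (u t i x) \<le> B" for t i x using a'b[of i x] by (simp add: u_def norm_mult)
  define h where "h t i y = (\<integral>z. u t i z \<partial>K y)" for t i y
  have hm[measurable]: "(\<lambda>y. (cmod (h t i y))\<^sup>2) \<in> borel_measurable N" if "i < n" for t i
    unfolding h_def using S.H_meas[OF um[OF that]] by measurable
  have hb: "(cmod (h t i y))\<^sup>2 \<le> B\<^sup>2" if "i < n" "y \<in> space N" for t i y
  proof -
    have "cmod (h t i y) \<le> B" unfolding h_def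
      by (rule S.H_bound[OF um[OF that(1)] _ B0 that(2)]) (rule ub)
    then show ?thesis by (simp add: power_mono)
  qed
  have step1: "C \<le> (\<Sum>i<n. \<integral>y. (cmod (h t i y))\<^sup>2 \<partial>N)" for t
  proof -
    have fm: "(\<lambda>z. cis (real t * \<phi> z)) \<in> borel_measurable R" using \<phi>R by measurable
    have "C \<le> (\<Sum>i<n. \<integral>x. (cmod (cond_exp_c M S.FF (\<lambda>x. cis (real t * \<phi> (p x)) * a i x) x))\<^sup>2 \<partial>M)"
      using assms(8)[OF fm] by simp
    also have "\<dots> = (\<Sum>i<n. \<integral>y. (cmod (h t i y))\<^sup>2 \<partial>N)"
    proof (rule sum.cong[OF refl])
      fix i assume "i \<in> {..<n}"
      then have i: "i < n" by simp
      have m1[measurable]: "(\<lambda>x. cis (real t * \<phi> (p x)) * a i x) \<in> borel_measurable M"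
        using am[OF i] \<psi>m unfolding \<psi>_def by measurable
      have ae: "AE x in M. cis (real t * \<phi> (p x)) * a i x = u t i x"
        using a'ae[OF i] by eventually_elim (simp add: u_def \<psi>_def)
      have "AE x in M. cond_exp_c M S.FF (\<lambda>x. cis (real t * \<phi> (p x)) * a i x) x = cond_exp_c M S.FF (u t i) x"
      proof -
        have "AE x in M. real_cond_exp M S.FF (\<lambda>x. Re (cis (real t * \<phi> (p x)) * a i x)) x
                        = real_cond_exp M S.FF (\<lambda>x. Re (u t i x)) x"
        proof -
          have ae2: "AE x in M. Re (cis (real t * \<phi> (p x)) * a i x) = Re (u t i x)"
            using ae by (rule eventually_mono) (erule arg_cong)
          have mm1: "(\<lambda>x. Re (cis (real t * \<phi> (p x)) * a i x)) \<in> borel_measurable M"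
            by (rule measurable_compose[OF m1 borel_measurable_Re])
          have mm2: "(\<lambda>x. Re (u t i x)) \<in> borel_measurable M"
            by (rule measurable_compose[OF um[OF i] borel_measurable_Re])
          show ?thesis by (rule sigma_finite_subalgebra.real_cond_exp_cong[OF S.sfs ae2 mm1 mm2])
        qed
        moreover have "AE x in M. real_cond_exp M S.FF (\<lambda>x. Im (cis (real t * \<phi> (p x)) * a i x)) x
                        = real_cond_exp M S.FF (\<lambda>x. Im (u t i x)) x"
        proof -
          have ae2: "AE x in M. Im (cis (real t * \<phi> (p x)) * a i x) = Im (u t i x)"
            using ae by (rule eventually_mono) (erule arg_cong)
          have mm1: "(\<lambda>x. Im (cis (real t * \<phi> (p x)) * a i x)) \<in> borel_measurable M"
            by (rule measurable_compose[OF m1 borel_measurable_Im])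
          have mm2: "(\<lambda>x. Im (u t i x)) \<in> borel_measurable M"
            by (rule measurable_compose[OF um[OF i] borel_measurable_Im])
          show ?thesis by (rule sigma_finite_subalgebra.real_cond_exp_cong[OF S.sfs ae2 mm1 mm2])
        qed
        ultimately show ?thesis by eventually_elim (simp add: cond_exp_c_def)
      qed
      then have "(\<integral>x. (cmod (cond_exp_c M S.FF (\<lambda>x. cis (real t * \<phi> (p x)) * a i x) x))\<^sup>2 \<partial>M)
          = (\<integral>x. (cmod (cond_exp_c M S.FF (u t i) x))\<^sup>2 \<partial>M)"
        by (intro integral_cong_AE) (use S.cexp_meas in \<open>auto elim: eventually_mono\<close>)
      also have "\<dots> = (\<integral>y. (cmod (h t i y))\<^sup>2 \<partial>N)"
        unfolding h_def by (rule S.sq_int[OF um[OF i] ub])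
      finally show "(\<integral>x. (cmod (cond_exp_c M S.FF (\<lambda>x. cis (real t * \<phi> (p x)) * a i x) x))\<^sup>2 \<partial>M)
          = (\<integral>y. (cmod (h t i y))\<^sup>2 \<partial>N)" .
    qed
    finally show ?thesis .
  qed
  define wf where "wf T z = cmod (avgc T (\<psi> (fst z) - \<psi> (snd z)))" for T z
  have wfm[measurable]: "wf T \<in> borel_measurable (M \<Otimes>\<^sub>M M)" for T
    unfolding wf_def by measurable
  have wfb: "norm (wf T z) \<le> 1" for T z by (simp add: wf_def avgc_norm)
  define Wy where "Wy T y = (\<integral>z. wf T z \<partial>(K y \<Otimes>\<^sub>M K y))" for T y
  have Wym[measurable]: "Wy T \<in> borel_measurable N" for T
    unfolding Wy_def by (rule measurable_compose[OF S.Kp integral_measurable_subprob_algebra[OF wfm]])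
  have Wyb: "norm (Wy T y) \<le> 1" if "y \<in> space N" for T y
    unfolding Wy_def
    by (rule subprob_int_bound[OF S.Kp_sub[OF that]])
       (use wfb in \<open>auto simp: measurable_cong_sets[OF S.Kp_sets[OF that] refl]\<close>)
  interpret NP: prob_space N by (rule PN)
  have step2: "(\<Sum>t<T. \<integral>y. (cmod (h t i y))\<^sup>2 \<partial>N) \<le> (\<integral>y. real T * B\<^sup>2 * Wy T y \<partial>N)"
    if i: "i < n" for T i
  proof -
    have hint: "integrable N (\<lambda>y. (cmod (h t i y))\<^sup>2)" for t
      by (rule NP.integrable_const_bound[where B="B\<^sup>2"]) (use hb[OF i] hm[OF i] in auto)
    have "(\<Sum>t<T. \<integral>y. (cmod (h t i y))\<^sup>2 \<partial>N) = (\<integral>y. (\<Sum>t<T. (cmod (h t i y))\<^sup>2) \<partial>N)"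
      by (rule Bochner_Integration.integral_sum[symmetric]) (rule hint)
    also have "\<dots> \<le> (\<integral>y. real T * B\<^sup>2 * Wy T y \<partial>N)"
    proof (rule integral_mono_AE)
      show "integrable N (\<lambda>y. \<Sum>t<T. (cmod (h t i y))\<^sup>2)"
        by (rule Bochner_Integration.integrable_sum) (rule hint)
      show "integrable N (\<lambda>y. real T * B\<^sup>2 * Wy T y)"
        by (rule integrable_mult_right, rule NP.integrable_const_bound[where B=1]) (use Wyb in auto)
      show "AE y in N. (\<Sum>t<T. (cmod (h t i y))\<^sup>2) \<le> real T * B\<^sup>2 * Wy T y"
        using S.K_conc AE_space
      proof eventually_elim
        case (elim y)
        have "(\<Sum>t<T. (cmod (\<integral>x. cis (real t * \<psi> x) * a' i x \<partial>K y))\<^sup>2)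
            \<le> real T * B\<^sup>2 * (\<integral>z. cmod (avgc T (\<psi> (fst z) - \<psi> (snd z))) \<partial>(K y \<Otimes>\<^sub>M K y))"
          by (rule avg_bound[OF _ S.Ky_meas[OF elim(2) a'm[OF i]] _ S.Ky_meas[OF elim(2) \<psi>m]])
             (use elim a'b in auto)
        then show ?case by (simp add: h_def u_def Wy_def wf_def)
      qed
    qed
    finally show ?thesis .
  qed
  have step3: "C \<le> real n * B\<^sup>2 * (\<integral>y. Wy T y \<partial>N)" if T: "T > 0" for T
  proof -
    have "real T * C = (\<Sum>t<T. C)" by simp
    also have "\<dots> \<le> (\<Sum>t<T. \<Sum>i<n. \<integral>y. (cmod (h t i y))\<^sup>2 \<partial>N)"
      by (rule sum_mono) (rule step1)
    also have "\<dots> = (\<Sum>i<n. \<Sum>t<T. \<integral>y. (cmod (h t i y))\<^sup>2 \<partial>N)" by (rule sum.swap)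
    also have "\<dots> \<le> (\<Sum>i<n. \<integral>y. real T * B\<^sup>2 * Wy T y \<partial>N)"
      by (rule sum_mono) (rule step2, simp)
    also have "\<dots> = real T * (real n * B\<^sup>2 * (\<integral>y. Wy T y \<partial>N))" by simp
    finally show ?thesis using T by simp
  qed
  have Deq: "D = {z \<in> space (M \<Otimes>\<^sub>M M). \<psi> (fst z) = \<psi> (snd z)}"
    using \<phi>i by (auto simp: D_def space_pair_measure \<psi>_def inj_eq)
  have Dsets: "D \<in> sets (M \<Otimes>\<^sub>M M)" unfolding Deq by measurable
  define g where "g y = emeasure (K y \<Otimes>\<^sub>M K y) D" for y
  have gm[measurable]: "g \<in> borel_measurable N"
    unfolding g_def by (rule measurable_compose[OF S.Kp measurable_emeasure_subprob_algebra[OF Dsets]])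
  define SS where "SS = {y \<in> space N. g y > 0}"
  have SSsets: "SS \<in> sets N" unfolding SS_def by measurable
  have "emeasure N SS = 0" using nz by (simp add: SS_def g_def D_def)
  then have SSnull: "SS \<in> null_sets N" using SSsets by auto
  have ae1: "AE y in N. y \<notin> SS" by (rule AE_I'[OF SSnull]) auto
  have ae2: "AE y in N. AE z in K y \<Otimes>\<^sub>M K y. \<psi> (fst z) \<noteq> \<psi> (snd z)"
    using ae1 AE_space
  proof eventually_elim
    case (elim y)
    have "g y = 0" using elim by (simp add: SS_def)
    then have "D \<in> null_sets (K y \<Otimes>\<^sub>M K y)"
      using Dsets S.Kp_sets[OF elim(2)] by (auto simp: g_def null_sets_def)
    then show ?case
    proof (rule AE_I')
      have "space (K y \<Otimes>\<^sub>M K y) = space (M \<Otimes>\<^sub>M M)"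
        using S.Kp_sets[OF elim(2)] sets_eq_imp_space_eq by blast
      then show "{z \<in> space (K y \<Otimes>\<^sub>M K y). \<not> \<psi> (fst z) \<noteq> \<psi> (snd z)} \<subseteq> D"
        unfolding Deq by auto
    qed
  qed
  define P where "P = N \<bind> (\<lambda>y. K y \<Otimes>\<^sub>M K y)"
  have Psets: "sets P = sets (M \<Otimes>\<^sub>M M)"
    unfolding P_def by (rule sets_bind[OF S.Kp_sets S.spN])
  have aeP: "AE z in P. \<psi> (fst z) \<noteq> \<psi> (snd z)"
    unfolding P_def by (subst AE_bind[OF S.Kp]) (measurable, rule ae2)
  have Psub: "subprob_space P"
    unfolding P_def by (rule subprob_space_bind[OF _ S.Kp]) (rule NP.subprob_space_axioms)
  interpret PS: subprob_space P by (rule Psub)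
  have wfP[measurable]: "wf T \<in> borel_measurable P" for T
    using wfm measurable_cong_sets[OF Psets refl] by blast
  have intW: "(\<integral>y. Wy T y \<partial>N) = (\<integral>z. wf T z \<partial>P)" for T
    unfolding P_def Wy_def
    by (rule integral_bind[where B'=1, symmetric, OF wfm _ S.Kp])
       (use wfb in \<open>auto intro!: AE_I2 subprob_space.subprob_emeasure_le_1 S.Kp_sub
             simp: NP.finite_measure_axioms\<close>)
  have lim0: "(\<lambda>T. \<integral>z. wf T z \<partial>P) \<longlonglongrightarrow> (\<integral>z. 0 \<partial>P)"
  proof (rule integral_dominated_convergence[where w="\<lambda>_. 1"])
    show "(\<lambda>z. 0::real) \<in> borel_measurable P" by simp
    show "wf T \<in> borel_measurable P" for T by (rule wfP)
    show "integrable P (\<lambda>_. 1::real)" by simp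
    show "AE z in P. norm (wf T z) \<le> 1" for T using wfb by simp
    show "AE z in P. (\<lambda>T. wf T z) \<longlonglongrightarrow> 0"
      using aeP
    proof eventually_elim
      case (elim z)
      have "\<bar>\<psi> (fst z) - \<psi> (snd z)\<bar> \<le> 2" using \<phi>b[of "p (fst z)"] \<phi>b[of "p (snd z)"]
        unfolding \<psi>_def by linarith
      also have "\<dots> < 2 * pi" using pi_gt3 by simp
      finally have "(\<lambda>T. avgc T (\<psi> (fst z) - \<psi> (snd z))) \<longlonglongrightarrow> 0"
        using elim by (intro avgc_tendsto) auto
      then show ?case unfolding wf_def by (rule tendsto_norm_zero)
    qed
  qed
  have lim1: "(\<lambda>T. real n * B\<^sup>2 * (\<integral>y. Wy T y \<partial>N)) \<longlonglongrightarrow> real n * B\<^sup>2 * 0"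
    unfolding intW by (rule tendsto_mult_left) (use lim0 in simp)
  have "C \<le> real n * B\<^sup>2 * 0"
    by (rule LIMSEQ_le_const[OF lim1]) (use step3 in \<open>auto intro!: exI[of _ 1]\<close>)
  then show False using assms(7) by simp
qed

end
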